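(* Let $\left|\psi\right\rangle$ be a pure three-qubit state of parties $A,B,C$. For $X\in\{A,B,C\}$ define $$E^X_{LOCC}(\left|\psi\right\rangle)=\max\sum_{i=0}^1p_i\,E(|\psi_i\rangle),$$ where the maximum is over all orthonormal bases $\{|x_0\rangle,|x_1\rangle\}$ of party $X$'s qubit, $p_i=\|(\langle x_i|_X\otimes I)\left|\psi\right\rangle\|^2$, $|\psi_i\rangle=p_i^{-1/2}(\langle x_i|_X\otimes I)\left|\psi\right\rangle$ is the resulting pure state of the two remaining qubits, and $E$ is the entanglement entropy (von Neumann entropy, base 2, of either one-qubit reduced state). Let $E_{LOCC}(\left|\psi\right\rangle)=\max\{E^A_{LOCC},E^B_{LOCC},E^C_{LOCC}\}$. Then $$E_{MB}(\left|\psi\right\rangle)\ \ge\ E_{LOCC}(\left|\psi\right\rangle),$$ i.e. the entanglement measurement bound of a pure tripartite qubit state does not increase on average under a complete local projective measurement of one party.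
   Context: Entanglement measurement bound (EMB). Let $\left|\psi\right\rangle$ be a unit vector in $\mathcal{H}_1\otimes\cdots\otimes\mathcal{H}_N$, $\mathcal{H}_j=\mathbb{C}^{d_j}$. An adaptive local measurement scheme consists of: an ordering $\pi$ of the parties $\{1,\dots,N\}$; an orthonormal basis $\{|\phi^{(1)}_{i_1}\rangle\}_{i_1}$ of $\mathcal{H}_{\pi(1)}$; and, for each $k=2,\dots,N$ and each outcome history $(i_1,\dots,i_{k-1})$, an orthonormal basis $\{|\phi^{(k)}_{i_k|i_1\dots i_{k-1}}\rangle\}_{i_k}$ of $\mathcal{H}_{\pi(k)}$ (which may depend on the history). Its outcome distribution is $p_{i_1\dots i_N}=\big|\big(\langle\phi^{(1)}_{i_1}|\otimes\langle\phi^{(2)}_{i_2|i_1}|\otimes\cdots\otimes\langle\phi^{(N)}_{i_N|i_1\dots i_{N-1}}|\big)\left|\psi\right\rangle\big|^2$, where the $k$-th bra acts on the tensor factor of party $\pi(k)$. The EMB is $E_{MB}(\left|\psi\right\rangle)=\min H(\mathbf{p})$, where $H(\mathbf{p})=-\sum p_{i_1\dots i_N}\log_2 p_{i_1\dots i_N}$ is the Shannon entropy and the minimum is over all adaptive local measurement schemes (including all orderings of the parties). *)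

theory Defs
  imports Complex_Main "HOL-Combinatorics.Permutations"
begin

text \<open>Parties are indexed 0..N-1, party j has Hilbert space C^(d j);
  vectors in C^m are functions nat => complex (only indices < m matter).
  A joint basis configuration is a function x :: nat => nat with x j < d j for j < N
  and x j = 0 for j >= N.  A state is a function from configurations to amplitudes.\<close>

definition configs :: "nat \<Rightarrow> (nat \<Rightarrow> nat) \<Rightarrow> (nat \<Rightarrow> nat) set" where
  "configs N d = {x. (\<forall>j<N. x j < d j) \<and> (\<forall>j\<ge>N. x j = 0)}"

definition unit_state :: "nat \<Rightarrow> (nat \<Rightarrow> nat) \<Rightarrow> ((nat \<Rightarrow> nat) \<Rightarrow> complex) \<Rightarrow> bool" where
  "unit_state N d \<psi> \<longleftrightarrow> (\<Sum>x\<in>configs N d. (cmod (\<psi> x))\<^sup>2) = 1"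

text \<open>b i is the i-th vector of an orthonormal basis of C^m (m orthonormal vectors in C^m).\<close>
definition onb :: "nat \<Rightarrow> (nat \<Rightarrow> nat \<Rightarrow> complex) \<Rightarrow> bool" where
  "onb m b \<longleftrightarrow> (\<forall>i<m. \<forall>j<m. (\<Sum>k<m. cnj (b i k) * b j k) = (if i = j then 1 else 0))"

definition shannon :: "('a \<Rightarrow> real) \<Rightarrow> 'a set \<Rightarrow> real" where
  "shannon p S = (\<Sum>s\<in>S. if p s = 0 then 0 else - p s * log 2 (p s))"

text \<open>Adaptive local measurement scheme: ordering pi (a permutation of the parties) and
  bases B hist, where hist is the list of previous outcomes (i_1,...,i_k); B hist is the
  basis of party pi k used at step k+1 (0-based step k = length hist).\<close>
definition valid_scheme :: "nat \<Rightarrow> (nat \<Rightarrow> nat) \<Rightarrow> (nat \<Rightarrow> nat) \<Rightarrow> (nat list \<Rightarrow> nat \<Rightarrow> nat \<Rightarrow> complex) \<Rightarrow> bool" where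
  "valid_scheme N d \<pi> B \<longleftrightarrow> \<pi> permutes {..<N} \<and>
     (\<forall>hist. length hist < N \<longrightarrow> (\<forall>m<length hist. hist ! m < d (\<pi> m)) \<longrightarrow>
        onb (d (\<pi> (length hist))) (B hist))"

text \<open>Probability of outcome string i (i k = outcome at step k).\<close>
definition outcome_prob :: "nat \<Rightarrow> (nat \<Rightarrow> nat) \<Rightarrow> ((nat \<Rightarrow> nat) \<Rightarrow> complex) \<Rightarrow> (nat \<Rightarrow> nat)
     \<Rightarrow> (nat list \<Rightarrow> nat \<Rightarrow> nat \<Rightarrow> complex) \<Rightarrow> (nat \<Rightarrow> nat) \<Rightarrow> real" where
  "outcome_prob N d \<psi> \<pi> B i =
     (cmod (\<Sum>x\<in>configs N d. (\<Prod>k<N. cnj (B (map i [0..<k]) (i k) (x (\<pi> k)))) * \<psi> x))\<^sup>2"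

definition EMB :: "nat \<Rightarrow> (nat \<Rightarrow> nat) \<Rightarrow> ((nat \<Rightarrow> nat) \<Rightarrow> complex) \<Rightarrow> real" where
  "EMB N d \<psi> = Inf {shannon (outcome_prob N d \<psi> \<pi> B) (configs N (d \<circ> \<pi>)) | \<pi> B. valid_scheme N d \<pi> B}"

definition vn_entropy :: "nat \<Rightarrow> (nat \<Rightarrow> nat \<Rightarrow> complex) \<Rightarrow> real" where
  "vn_entropy m \<rho> = (SOME h. \<exists>lam v. onb m v \<and>
       (\<forall>j<m. \<forall>j'<m. \<rho> j j' = (\<Sum>k<m. complex_of_real (lam k) * v k j * cnj (v k j'))) \<and>
       h = shannon lam {..<m})"

text \<open>Entanglement entropy of a two-qubit pure state with amplitudes phi j k
  (first qubit j, second qubit k): von Neumann entropy of the reduced state of the first qubit.\<close>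
definition ent_entropy :: "(nat \<Rightarrow> nat \<Rightarrow> complex) \<Rightarrow> real" where
  "ent_entropy \<phi> = vn_entropy 2 (\<lambda>j j'. \<Sum>k<2. \<phi> j k * cnj (\<phi> j' k))"

definition cfg3 :: "nat \<Rightarrow> nat \<Rightarrow> nat \<Rightarrow> nat \<Rightarrow> nat \<Rightarrow> nat \<Rightarrow> (nat \<Rightarrow> nat)" where
  "cfg3 X a Y b Z c = (\<lambda>_. 0)(X := a, Y := b, Z := c)"

text \<open>The two remaining parties (in increasing order) when party X in {0,1,2} is measured.\<close>
definition rest1 :: "nat \<Rightarrow> nat" where "rest1 X = (if X = 0 then 1 else 0)"
definition rest2 :: "nat \<Rightarrow> nat" where "rest2 X = (if X = 2 then 1 else 2)"

text \<open>Unnormalised post-measurement state (<x_i|_X tensor I)|psi> of the remaining two qubits.\<close>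
definition post_unnorm :: "((nat \<Rightarrow> nat) \<Rightarrow> complex) \<Rightarrow> nat \<Rightarrow> (nat \<Rightarrow> nat \<Rightarrow> complex) \<Rightarrow> nat \<Rightarrow> nat \<Rightarrow> nat \<Rightarrow> complex" where
  "post_unnorm \<psi> X b i j k = (\<Sum>a<2. cnj (b i a) * \<psi> (cfg3 X a (rest1 X) j (rest2 X) k))"

definition post_prob :: "((nat \<Rightarrow> nat) \<Rightarrow> complex) \<Rightarrow> nat \<Rightarrow> (nat \<Rightarrow> nat \<Rightarrow> complex) \<Rightarrow> nat \<Rightarrow> real" where
  "post_prob \<psi> X b i = (\<Sum>j<2. \<Sum>k<2. (cmod (post_unnorm \<psi> X b i j k))\<^sup>2)"

definition post_state :: "((nat \<Rightarrow> nat) \<Rightarrow> complex) \<Rightarrow> nat \<Rightarrow> (nat \<Rightarrow> nat \<Rightarrow> complex) \<Rightarrow> nat \<Rightarrow> nat \<Rightarrow> nat \<Rightarrow> complex" where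
  "post_state \<psi> X b i j k = post_unnorm \<psi> X b i j k / complex_of_real (sqrt (post_prob \<psi> X b i))"

definition E_LOCC_party :: "((nat \<Rightarrow> nat) \<Rightarrow> complex) \<Rightarrow> nat \<Rightarrow> real" where
  "E_LOCC_party \<psi> X = Sup {\<Sum>i<2. post_prob \<psi> X b i * ent_entropy (post_state \<psi> X b i) | b. onb 2 b}"

definition E_LOCC :: "((nat \<Rightarrow> nat) \<Rightarrow> complex) \<Rightarrow> real" where
  "E_LOCC \<psi> = Max {E_LOCC_party \<psi> 0, E_LOCC_party \<psi> 1, E_LOCC_party \<psi> 2}"

end

theory Submission
  imports Defs "HOL-Analysis.Convex"
begin



definition phi :: "real \<Rightarrow> real" where
  "phi x = (if x = 0 then 0 else - x * log 2 x)"

lemma shannon_phi: "shannon p S = (\<Sum>s\<in>S. phi (p s))"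
  unfolding shannon_def phi_def by simp

lemma phi_0[simp]: "phi 0 = 0" by (simp add: phi_def)

lemma phi_bound:
  assumes "x \<ge> 0" "m > 0"
  shows "phi x \<le> - x * log 2 m + (m - x) / ln 2"
proof (cases "x = 0")
  case True then show ?thesis using assms by (simp add: phi_def)
next
  case False
  then have x: "x > 0" using assms by simp
  have "ln (m / x) \<le> m / x - 1" by (rule ln_le_minus_one) (use x assms in simp)
  then have "x * ln (m/x) \<le> x * (m/x - 1)" using x by (simp add: mult_left_mono)
  also have "\<dots> = m - x" using x by (simp add: field_simps)
  finally have h: "x * (ln m - ln x) \<le> m - x" using x assms by (simp add: ln_div)
  have h2: "- x * ln x \<le> - x * ln m + (m - x)" using h by (simp add: algebra_simps)
  have "phi x = - x * ln x / ln 2" using False by (simp add: phi_def log_def)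
  also have "\<dots> \<le> (- x * ln m + (m - x)) / ln 2"
    using divide_right_mono[OF h2, of "ln 2"] by simp
  also have "\<dots> = - x * log 2 m + (m - x) / ln 2" by (simp add: log_def diff_divide_distrib add_divide_distrib)
  finally show ?thesis .
qed

lemma phi_conc:
  assumes "finite I" "\<And>i. i \<in> I \<Longrightarrow> t i \<ge> 0" "(\<Sum>i\<in>I. t i) \<le> 1"
    "\<And>i. i \<in> I \<Longrightarrow> x i \<ge> 0"
  shows "(\<Sum>i\<in>I. t i * phi (x i)) \<le> phi (\<Sum>i\<in>I. t i * x i)"
proof -
  define m where "m = (\<Sum>i\<in>I. t i * x i)"
  have m0: "m \<ge> 0" unfolding m_def using assms by (simp add: sum_nonneg)
  show ?thesis
  proof (cases "m = 0")
    case True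
    then have "\<forall>i\<in>I. t i * x i = 0" unfolding m_def
      using assms by (subst (asm) sum_nonneg_eq_0_iff) auto
    then have "\<forall>i\<in>I. t i * phi (x i) = 0" by (auto simp: phi_def)
    then have "(\<Sum>i\<in>I. t i * phi (x i)) = 0" by (intro sum.neutral) auto
    then show ?thesis using True m_def by simp
  next
    case False
    then have mp: "m > 0" using m0 by simp
    have "(\<Sum>i\<in>I. t i * phi (x i)) \<le> (\<Sum>i\<in>I. t i * (- x i * log 2 m + (m - x i) / ln 2))"
      by (rule sum_mono) (use assms phi_bound[OF _ mp] in \<open>auto intro: mult_left_mono\<close>)
    also have "\<dots> = (\<Sum>i\<in>I. - (t i * x i) * log 2 m) + (\<Sum>i\<in>I. (m * t i - t i * x i) / ln 2)"
      by (subst sum.distrib[symmetric]) (rule sum.cong, auto simp: field_simps)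
    also have "\<dots> = - m * log 2 m + (m * (\<Sum>i\<in>I. t i) - m) / ln 2"
      by (simp add: m_def sum_distrib_right[symmetric] sum_negf sum_divide_distrib[symmetric] sum_subtractf sum_distrib_left)
    also have "\<dots> \<le> - m * log 2 m"
    proof -
      have "m * (\<Sum>i\<in>I. t i) - m \<le> 0" using mult_left_mono[OF assms(3), of m] mp by simp
      then show ?thesis by (simp add: divide_nonpos_pos)
    qed
    also have "\<dots> = phi m" using False by (simp add: phi_def)
    finally show ?thesis unfolding m_def .
  qed
qed

lemma phi_subadd:
  assumes "finite J" "\<And>j. j \<in> J \<Longrightarrow> y j \<ge> 0"
  shows "phi (\<Sum>j\<in>J. y j) \<le> (\<Sum>j\<in>J. phi (y j))"
proof -
  define s where "s = (\<Sum>j\<in>J. y j)"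
  have s0: "s \<ge> 0" unfolding s_def using assms by (simp add: sum_nonneg)
  show ?thesis
  proof (cases "s = 0")
    case True then show ?thesis
      using assms by (simp add: s_def phi_def sum_nonneg_eq_0_iff)
  next
    case False
    then have sp: "s > 0" using s0 by simp
    have le: "y j \<le> s" if "j \<in> J" for j
      unfolding s_def using assms that by (intro member_le_sum) auto
    have "(\<Sum>j\<in>J. - y j * log 2 s) = - s * log 2 s"
      by (simp add: s_def sum_distrib_right sum_negf)
    then have "phi s = (\<Sum>j\<in>J. - y j * log 2 s)" using False
      by (simp add: phi_def)
    also have "\<dots> \<le> (\<Sum>j\<in>J. phi (y j))"
    proof (rule sum_mono)
      fix j assume j: "j \<in> J"
      show "- y j * log 2 s \<le> phi (y j)"
      proof (cases "y j = 0")
        case True then show ?thesis by simp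
      next
        case False
        then have "y j > 0" using assms(2)[OF j] by linarith
        then have "log 2 (y j) \<le> log 2 s" using le[OF j] by simp
        then show ?thesis using False \<open>y j > 0\<close> by (simp add: phi_def mult_left_mono)
      qed
    qed
    finally show ?thesis unfolding s_def .
  qed
qed

lemma maj:
  fixes s :: "'z \<Rightarrow> nat \<Rightarrow> real"
  assumes "finite Z" "\<And>k. k < 2 \<Longrightarrow> \<mu> k \<ge> 0"
    "\<And>z k. z \<in> Z \<Longrightarrow> k < 2 \<Longrightarrow> s z k \<ge> 0"
    "\<And>z. z \<in> Z \<Longrightarrow> (\<Sum>k<2. s z k) \<le> 1"
    "\<And>k. k < 2 \<Longrightarrow> \<mu> k = 0 \<or> (\<Sum>z\<in>Z. s z k) = 1"
    "\<And>z. z \<in> Z \<Longrightarrow> w z = (\<Sum>k<2. s z k * \<mu> k)"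
  shows "(\<Sum>k<2. phi (\<mu> k)) \<le> (\<Sum>z\<in>Z. phi (w z))"
proof -
  have "(\<Sum>k<2. phi (\<mu> k)) = (\<Sum>k<2. (\<Sum>z\<in>Z. s z k) * phi (\<mu> k))"
  proof (rule sum.cong)
    fix k assume "k \<in> {..<2::nat}"
    then have "\<mu> k = 0 \<or> (\<Sum>z\<in>Z. s z k) = 1" using assms(5) by auto
    then show "phi (\<mu> k) = (\<Sum>z\<in>Z. s z k) * phi (\<mu> k)" by auto
  qed simp
  also have "\<dots> = (\<Sum>z\<in>Z. \<Sum>k<2. s z k * phi (\<mu> k))"
    by (simp add: sum_distrib_right sum.swap[of _ Z])
  also have "\<dots> \<le> (\<Sum>z\<in>Z. phi (w z))"
    by (rule sum_mono) (use assms in \<open>auto intro!: phi_conc\<close>)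
  finally show ?thesis .
qed




lemma sum2: "(\<Sum>k<(2::nat). f k) = f 0 + f 1"
  by (simp add: numeral_2_eq_2)

lemma prod3: "(\<Prod>k<(3::nat). f k) = f 0 * f 1 * f 2"
  by (simp add: numeral_3_eq_3 numeral_2_eq_2)

lemma less2: "(k::nat) < 2 \<longleftrightarrow> k = 0 \<or> k = 1" by auto

definition inn :: "(nat \<Rightarrow> complex) \<Rightarrow> (nat \<Rightarrow> complex) \<Rightarrow> complex" where
  "inn f g = (\<Sum>j<2. cnj (f j) * g j)"

definition bform :: "(nat \<Rightarrow> nat \<Rightarrow> complex) \<Rightarrow> (nat \<Rightarrow> complex) \<Rightarrow> (nat \<Rightarrow> complex) \<Rightarrow> complex" where
  "bform \<rho> f g = (\<Sum>j<2. \<Sum>j'<2. cnj (f j) * \<rho> j j' * g j')"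

definition dec :: "(nat \<Rightarrow> real) \<Rightarrow> (nat \<Rightarrow> nat \<Rightarrow> complex) \<Rightarrow> (nat \<Rightarrow> nat \<Rightarrow> complex) \<Rightarrow> bool" where
  "dec lam v \<rho> \<longleftrightarrow> onb 2 v \<and>
     (\<forall>j<2. \<forall>j'<2. \<rho> j j' = (\<Sum>k<2. complex_of_real (lam k) * v k j * cnj (v k j')))"

lemma inn_cnj: "inn g f = cnj (inn f g)"
  by (simp add: inn_def mult.commute)

lemma sqc: "(complex_of_real (cmod z))\<^sup>2 = z * cnj z"
  using complex_norm_square[of z] by simp

lemma mult_cnj_self: "z * cnj z = complex_of_real ((cmod z)\<^sup>2)"
  by (simp only: complex_norm_square)

lemma inn_self: "inn f f = complex_of_real (\<Sum>j<2. (cmod (f j))\<^sup>2)"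
  by (simp add: inn_def sqc mult.commute)

lemma onb_rows:
  assumes "onb 2 v"
  shows "cnj (v 0 0) * v 0 0 + cnj (v 0 1) * v 0 1 = 1"
    "cnj (v 1 0) * v 1 0 + cnj (v 1 1) * v 1 1 = 1"
    "cnj (v 0 0) * v 1 0 + cnj (v 0 1) * v 1 1 = 0"
    "cnj (v 1 0) * v 0 0 + cnj (v 1 1) * v 0 1 = 0"
  using assms unfolding onb_def by (auto simp: sum2)

lemma onb_cols_aux:
  assumes "onb 2 v"
  shows "cnj (v 0 0) * v 0 0 + cnj (v 1 0) * v 1 0 = 1"
    "cnj (v 0 1) * v 0 1 + cnj (v 1 1) * v 1 1 = 1"
    "cnj (v 0 0) * v 0 1 + cnj (v 1 0) * v 1 1 = 0"
    "cnj (v 0 1) * v 0 0 + cnj (v 1 1) * v 1 0 = 0"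
    "cnj (v 0 0 * v 1 1 - v 0 1 * v 1 0) * (v 0 0 * v 1 1 - v 0 1 * v 1 0) = 1"
proof -
  define a b c d where "a = v 0 0" "b = v 0 1" "c = v 1 0" "d = v 1 1"
  define D where "D = a * d - b * c"
  note r = onb_rows[OF assms, folded a_b_c_d_def]
  have hc: "c = - D * cnj b"
  proof -
    have "c - (- D * cnj b) = a * (cnj a * c + cnj b * d) + c * (1 - (cnj a * a + cnj b * b))"
      unfolding D_def by (simp add: algebra_simps)
    then have "c - (- D * cnj b) = 0" using r by simp
    then show ?thesis by (metis eq_iff_diff_eq_0)
  qed
  have hd: "d = D * cnj a"
  proof -
    have "d - D * cnj a = b * (cnj a * c + cnj b * d) + d * (1 - (cnj a * a + cnj b * b))"
      unfolding D_def by (simp add: algebra_simps)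
    then have "d - D * cnj a = 0" using r by simp
    then show ?thesis by (metis eq_iff_diff_eq_0)
  qed
  have hD: "cnj D * D = 1"
  proof -
    have "cnj c * c + cnj d * d = cnj D * D * (cnj a * a + cnj b * b)"
      by (simp only: hc hd) (simp add: algebra_simps)
    then show ?thesis using r by simp
  qed
  have "cnj a * a + cnj c * c = cnj a * a + cnj b * b * (cnj D * D)"
    by (simp only: hc) (simp add: algebra_simps)
  then show "cnj (v 0 0) * v 0 0 + cnj (v 1 0) * v 1 0 = 1" using r hD a_b_c_d_def by simp
  have "cnj b * b + cnj d * d = cnj b * b + cnj a * a * (cnj D * D)"
    by (simp only: hd) (simp add: algebra_simps)
  then show "cnj (v 0 1) * v 0 1 + cnj (v 1 1) * v 1 1 = 1" using r hD a_b_c_d_def by (simp add: add.commute)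
  have "cnj a * b + cnj c * d = cnj a * b * (1 - cnj D * D)"
    by (simp only: hc hd) (simp add: algebra_simps)
  then show "cnj (v 0 0) * v 0 1 + cnj (v 1 0) * v 1 1 = 0" using r hD a_b_c_d_def by simp
  then have "cnj (cnj (v 0 0) * v 0 1 + cnj (v 1 0) * v 1 1) = 0" by simp
  then show "cnj (v 0 1) * v 0 0 + cnj (v 1 1) * v 1 0 = 0" by (simp add: mult.commute)
  show "cnj (v 0 0 * v 1 1 - v 0 1 * v 1 0) * (v 0 0 * v 1 1 - v 0 1 * v 1 0) = 1"
    using hD by (simp add: D_def a_b_c_d_def)
qed

lemma onb_col:
  assumes "onb 2 v" "a < 2" "b < 2"
  shows "(\<Sum>k<2. cnj (v k a) * v k b) = (if a = b then 1 else 0)"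
  using onb_cols_aux[OF assms(1)] assms(2,3) by (auto simp: sum2 less2)

lemma onb_col':
  assumes "onb 2 v" "a < 2" "b < 2"
  shows "(\<Sum>k<2. v k a * cnj (v k b)) = (if a = b then 1 else 0)"
proof -
  have "(\<Sum>k<2. v k a * cnj (v k b)) = cnj (\<Sum>k<2. cnj (v k a) * v k b)"
    by (simp add: mult.commute)
  then show ?thesis using onb_col[OF assms] by simp
qed

lemma onb_row:
  assumes "onb 2 v" "a < 2" "b < 2"
  shows "inn (v a) (v b) = (if a = b then 1 else 0)"
  using assms unfolding onb_def inn_def by auto

lemma parseval:
  assumes "onb 2 v"
  shows "(\<Sum>k<2. inn g (v k) * inn (v k) h) = inn g h"
proof -
  have c1: "v 0 0 * cnj (v 0 0) + v 1 0 * cnj (v 1 0) = 1"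
    using onb_col'[OF assms, of 0 0] by (simp add: sum2)
  have c2: "v 0 0 * cnj (v 0 1) + v 1 0 * cnj (v 1 1) = 0"
    using onb_col'[OF assms, of 0 1] by (simp add: sum2)
  have c3: "v 0 1 * cnj (v 0 0) + v 1 1 * cnj (v 1 0) = 0"
    using onb_col'[OF assms, of 1 0] by (simp add: sum2)
  have c4: "v 0 1 * cnj (v 0 1) + v 1 1 * cnj (v 1 1) = 1"
    using onb_col'[OF assms, of 1 1] by (simp add: sum2)
  have "(\<Sum>k<2. inn g (v k) * inn (v k) h) - inn g h =
     cnj (g 0) * h 0 * (v 0 0 * cnj (v 0 0) + v 1 0 * cnj (v 1 0) - 1)
   + cnj (g 0) * h 1 * (v 0 0 * cnj (v 0 1) + v 1 0 * cnj (v 1 1))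
   + cnj (g 1) * h 0 * (v 0 1 * cnj (v 0 0) + v 1 1 * cnj (v 1 0))
   + cnj (g 1) * h 1 * (v 0 1 * cnj (v 0 1) + v 1 1 * cnj (v 1 1) - 1)"
    by (simp add: inn_def sum2 algebra_simps)
  then show ?thesis using c1 c2 c3 c4 by simp
qed

lemma parseval_real:
  assumes "onb 2 v"
  shows "(\<Sum>k<2. (cmod (inn (v k) g))\<^sup>2) = (\<Sum>j<2. (cmod (g j))\<^sup>2)"
proof -
  have "complex_of_real (\<Sum>k<2. (cmod (inn (v k) g))\<^sup>2) = (\<Sum>k<2. inn g (v k) * inn (v k) g)"
    by (simp add: inn_cnj[of g] sqc mult.commute)
  also have "\<dots> = inn g g" by (rule parseval[OF assms])
  also have "\<dots> = complex_of_real (\<Sum>j<2. (cmod (g j))\<^sup>2)" by (rule inn_self)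
  finally show ?thesis by (simp only: of_real_eq_iff)
qed

lemma bform_expand:
  "bform \<rho> f g = cnj (f 0) * \<rho> 0 0 * g 0 + cnj (f 0) * \<rho> 0 1 * g 1
     + cnj (f 1) * \<rho> 1 0 * g 0 + cnj (f 1) * \<rho> 1 1 * g 1"
  by (simp add: bform_def sum2)

lemma dec_bform:
  assumes "dec lam v \<rho>"
  shows "bform \<rho> f g = (\<Sum>k<2. complex_of_real (lam k) * inn f (v k) * inn (v k) g)"
proof -
  have r: "\<rho> j j' = (\<Sum>k<2. complex_of_real (lam k) * v k j * cnj (v k j'))" if "j<2" "j'<2" for j j'
    using assms that unfolding dec_def by auto
  show ?thesis
    by (simp add: bform_expand r inn_def sum2 algebra_simps)
qed

lemma gram_bform:
  assumes "\<And>j j'. j < 2 \<Longrightarrow> j' < 2 \<Longrightarrow> \<rho> j j' = (\<Sum>z\<in>Z. u z j * cnj (u z j'))"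
  shows "bform \<rho> f g = (\<Sum>z\<in>Z. inn f (u z) * inn (u z) g)"
proof -
  have "bform \<rho> f g = (\<Sum>z\<in>Z. cnj (f 0) * (u z 0 * cnj (u z 0)) * g 0)
     + (\<Sum>z\<in>Z. cnj (f 0) * (u z 0 * cnj (u z 1)) * g 1)
     + (\<Sum>z\<in>Z. cnj (f 1) * (u z 1 * cnj (u z 0)) * g 0)
     + (\<Sum>z\<in>Z. cnj (f 1) * (u z 1 * cnj (u z 1)) * g 1)"
    by (simp add: bform_expand assms sum_distrib_left sum_distrib_right)
  also have "\<dots> = (\<Sum>z\<in>Z. cnj (f 0) * (u z 0 * cnj (u z 0)) * g 0
     + cnj (f 0) * (u z 0 * cnj (u z 1)) * g 1
     + cnj (f 1) * (u z 1 * cnj (u z 0)) * g 0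
     + cnj (f 1) * (u z 1 * cnj (u z 1)) * g 1)"
    by (simp add: sum.distrib)
  also have "\<dots> = (\<Sum>z\<in>Z. inn f (u z) * inn (u z) g)"
    by (rule sum.cong) (simp_all add: inn_def sum2 algebra_simps)
  finally show ?thesis .
qed

lemma dec_eig:
  assumes "dec lam v \<rho>" "m < 2" "m' < 2"
  shows "bform \<rho> (v m) (v m') = (if m = m' then complex_of_real (lam m) else 0)"
proof -
  have o: "onb 2 v" using assms(1) by (simp add: dec_def)
  show ?thesis using assms(2,3)
    by (simp add: dec_bform[OF assms(1)] onb_row[OF o] sum2 less2) auto
qed




lemma dec_onb: "dec lam v \<rho> \<Longrightarrow> onb 2 v" by (simp add: dec_def)

lemma dec_entry: "dec lam v \<rho> \<Longrightarrow> j < 2 \<Longrightarrow> j' < 2 \<Longrightarrow>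
   \<rho> j j' = (\<Sum>k<2. complex_of_real (lam k) * v k j * cnj (v k j'))"
  by (simp add: dec_def)

lemma dec_tr:
  assumes "dec lam v \<rho>"
  shows "\<rho> 0 0 + \<rho> 1 1 = complex_of_real (lam 0 + lam 1)"
proof -
  note r = onb_rows[OF dec_onb[OF assms]]
  have "\<rho> 0 0 + \<rho> 1 1 - complex_of_real (lam 0 + lam 1) =
     complex_of_real (lam 0) * (cnj (v 0 0) * v 0 0 + cnj (v 0 1) * v 0 1 - 1)
   + complex_of_real (lam 1) * (cnj (v 1 0) * v 1 0 + cnj (v 1 1) * v 1 1 - 1)"
    by (simp add: dec_entry[OF assms] sum2 algebra_simps)
  then show ?thesis using r by simp
qed

lemma dec_det:
  assumes "dec lam v \<rho>"
  shows "\<rho> 0 0 * \<rho> 1 1 - \<rho> 0 1 * \<rho> 1 0 = complex_of_real (lam 0 * lam 1)"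
proof -
  have D: "cnj (v 0 0 * v 1 1 - v 0 1 * v 1 0) * (v 0 0 * v 1 1 - v 0 1 * v 1 0) = 1"
    using onb_cols_aux(5)[OF dec_onb[OF assms]] .
  have "\<rho> 0 0 * \<rho> 1 1 - \<rho> 0 1 * \<rho> 1 0 = complex_of_real (lam 0 * lam 1) *
      (cnj (v 0 0 * v 1 1 - v 0 1 * v 1 0) * (v 0 0 * v 1 1 - v 0 1 * v 1 0))"
    by (simp add: dec_entry[OF assms] sum2 algebra_simps)
  then show ?thesis using D by simp
qed

lemma pair_eq:
  fixes x y x' y' :: real
  assumes "x + y = x' + y'" "x * y = x' * y'"
  shows "(x' = x \<and> y' = y) \<or> (x' = y \<and> y' = x)"
proof -
  have "(x' - x) * (x' - y) = x' * x' - x' * (x + y) + x * y" by (simp add: algebra_simps)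
  also have "\<dots> = x' * x' - x' * (x' + y') + x' * y'" using assms by simp
  also have "\<dots> = 0" by (simp add: algebra_simps)
  finally have "(x' - x) * (x' - y) = 0" .
  then show ?thesis using assms by auto
qed

lemma dec_same:
  assumes "dec lam v \<rho>" "dec lam' v' \<rho>"
  shows "(\<Sum>k<2. phi (lam k)) = (\<Sum>k<2. phi (lam' k))"
proof -
  have "lam 0 + lam 1 = lam' 0 + lam' 1"
    using dec_tr[OF assms(1)] dec_tr[OF assms(2)] by (metis of_real_eq_iff)
  moreover have "lam 0 * lam 1 = lam' 0 * lam' 1"
    using dec_det[OF assms(1)] dec_det[OF assms(2)] by (metis of_real_eq_iff)
  ultimately have "(lam' 0 = lam 0 \<and> lam' 1 = lam 1) \<or> (lam' 0 = lam 1 \<and> lam' 1 = lam 0)"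
    by (rule pair_eq)
  then show ?thesis by (auto simp: sum2)
qed

lemma vn_dec:
  assumes "dec lam v \<rho>"
  shows "vn_entropy 2 \<rho> = (\<Sum>k<2. phi (lam k))"
proof -
  let ?P = "\<lambda>h. \<exists>lam v. onb 2 v \<and>
       (\<forall>j<2. \<forall>j'<2. \<rho> j j' = (\<Sum>k<2. complex_of_real (lam k) * v k j * cnj (v k j'))) \<and>
       h = shannon lam {..<2}"
  have "?P (shannon lam {..<2})" using assms unfolding dec_def by blast
  then have "?P (SOME h. ?P h)" by (rule someI)
  then obtain lam' v' where d: "dec lam' v' \<rho>" and h: "(SOME h. ?P h) = shannon lam' {..<2}"
    unfolding dec_def by blast
  have "vn_entropy 2 \<rho> = shannon lam' {..<2}" unfolding vn_entropy_def using h by simp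
  also have "\<dots> = (\<Sum>k<2. phi (lam k))" using dec_same[OF assms d] by (simp add: shannon_phi)
  finally show ?thesis .
qed

lemma dec_exists:
  assumes "\<rho> 1 0 = cnj (\<rho> 0 1)" "Im (\<rho> 0 0) = 0" "Im (\<rho> 1 1) = 0"
  shows "\<exists>lam v. dec lam v \<rho>"
proof -
  define a where "a = Re (\<rho> 0 0)"
  define d where "d = Re (\<rho> 1 1)"
  define c where "c = \<rho> 0 1"
  have ra: "\<rho> 0 0 = complex_of_real a" using assms(2) by (simp add: a_def complex_eq_iff)
  have rd: "\<rho> 1 1 = complex_of_real d" using assms(3) by (simp add: d_def complex_eq_iff)
  have rc: "\<rho> 1 0 = cnj c" using assms(1) by (simp add: c_def)
  show ?thesis
  proof (cases "c = 0")
    case True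
    define v where "v = (\<lambda>k j::nat. if k = j then (1::complex) else 0)"
    define lam where "lam = (\<lambda>k::nat. if k = 0 then a else d)"
    have "dec lam v \<rho>"
      unfolding dec_def onb_def using ra rd rc True
      by (auto simp: v_def lam_def sum2 less2 c_def)
    then show ?thesis by blast
  next
    case False
    define C where "C = (cmod c)\<^sup>2"
    have Cp: "C > 0" using False by (simp add: C_def)
    define s where "s = sqrt (((a - d) / 2)\<^sup>2 + C)"
    define t where "t = (d - a) / 2 + s"
    have ss: "s\<^sup>2 = ((a - d) / 2)\<^sup>2 + C" unfolding s_def using Cp
      by (simp add: add_nonneg_pos less_imp_le)
    have tC: "C = t * (t + a - d)"
    proof -
      have "t * (t + a - d) = s\<^sup>2 - ((a - d) / 2)\<^sup>2" by (simp add: t_def power2_eq_square field_simps)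
      then show ?thesis using ss by simp
    qed
    define n where "n = sqrt (C + t\<^sup>2)"
    have np: "n > 0" unfolding n_def using Cp by (simp add: add_pos_nonneg)
    have n2: "n\<^sup>2 = C + t\<^sup>2" unfolding n_def using Cp by simp
    have cc: "c * cnj c = complex_of_real C" by (simp add: C_def sqc)
    have cc': "cnj c * c = complex_of_real C" using cc by (simp add: mult.commute)
    define v where "v = (\<lambda>(k::nat) (j::nat). if k = 0 then (if j = 0 then c / complex_of_real n else complex_of_real (t / n))
                        else (if j = 0 then complex_of_real (- t / n) else cnj c / complex_of_real n))"
    define lam where "lam = (\<lambda>k::nat. if k = 0 then t + a else d - t)"
    have num0: "(t + a) * C + (d - t) * t\<^sup>2 = a * (C + t\<^sup>2)"
      by (simp add: tC algebra_simps power2_eq_square)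
    have num1: "(t + a) * t\<^sup>2 + (d - t) * C = d * (C + t\<^sup>2)"
      by (simp add: tC algebra_simps power2_eq_square)
    have numk: "t * (2 * t + a - d) = C + t\<^sup>2"
      by (simp add: tC algebra_simps power2_eq_square)
    have nz: "complex_of_real n \<noteq> 0" using np by simp
    have e1: "(C + t\<^sup>2) / n\<^sup>2 = 1" using n2 np by (metis div_self power_not_zero less_irrefl)
    have o: "onb 2 v"
    proof -
      have "cnj (v 0 0) * v 0 0 + cnj (v 0 1) * v 0 1 = complex_of_real ((C + t\<^sup>2) / n\<^sup>2)"
        using nz by (simp add: v_def cc cc' field_simps power2_eq_square)
      moreover have "cnj (v 1 0) * v 1 0 + cnj (v 1 1) * v 1 1 = complex_of_real ((C + t\<^sup>2) / n\<^sup>2)"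
        using nz by (simp add: v_def cc cc' field_simps power2_eq_square)
      moreover have "cnj (v 0 0) * v 1 0 + cnj (v 0 1) * v 1 1 = 0"
        using nz by (simp add: v_def field_simps)
      moreover have "cnj (v 1 0) * v 0 0 + cnj (v 1 1) * v 0 1 = 0"
        using nz by (simp add: v_def field_simps)
      ultimately show ?thesis unfolding onb_def using e1 by (auto simp: sum2 less2)
    qed
    have x00: "\<rho> 0 0 = (\<Sum>k<2. complex_of_real (lam k) * v k 0 * cnj (v k 0))"
    proof -
      have "(\<Sum>k<2. complex_of_real (lam k) * v k 0 * cnj (v k 0)) =
            complex_of_real (((t + a) * C + (d - t) * t\<^sup>2) / n\<^sup>2)"
        using nz by (simp add: sum2 v_def lam_def cc cc' field_simps power2_eq_square)
      also have "((t + a) * C + (d - t) * t\<^sup>2) / n\<^sup>2 = a"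
        using np by (simp add: num0 n2[symmetric])
      finally show ?thesis using ra by simp
    qed
    have x11: "\<rho> 1 1 = (\<Sum>k<2. complex_of_real (lam k) * v k 1 * cnj (v k 1))"
    proof -
      have "(\<Sum>k<2. complex_of_real (lam k) * v k 1 * cnj (v k 1)) =
            complex_of_real (((t + a) * t\<^sup>2 + (d - t) * C) / n\<^sup>2)"
        using nz by (simp add: sum2 v_def lam_def cc cc' field_simps power2_eq_square)
      also have "((t + a) * t\<^sup>2 + (d - t) * C) / n\<^sup>2 = d"
        using np by (simp add: num1 n2[symmetric])
      finally show ?thesis using rd by simp
    qed
    have k: "t * (2 * t + a - d) / n\<^sup>2 = 1"
      using np by (simp add: numk n2[symmetric])
    have x01: "\<rho> 0 1 = (\<Sum>k<2. complex_of_real (lam k) * v k 0 * cnj (v k 1))"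
    proof -
      have "(\<Sum>k<2. complex_of_real (lam k) * v k 0 * cnj (v k 1)) =
            c * complex_of_real (t * (2 * t + a - d) / n\<^sup>2)"
        using nz by (simp add: sum2 v_def lam_def field_simps power2_eq_square)
      then show ?thesis using k by (simp add: c_def)
    qed
    have x10: "\<rho> 1 0 = (\<Sum>k<2. complex_of_real (lam k) * v k 1 * cnj (v k 0))"
    proof -
      have "(\<Sum>k<2. complex_of_real (lam k) * v k 1 * cnj (v k 0)) =
            cnj c * complex_of_real (t * (2 * t + a - d) / n\<^sup>2)"
        using nz by (simp add: sum2 v_def lam_def field_simps power2_eq_square)
      then show ?thesis using k rc by simp
    qed
    have "dec lam v \<rho>" unfolding dec_def using o x00 x01 x10 x11 by (auto simp: less2)
    then show ?thesis by blast
  qed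
qed




lemma onb_norm1:
  assumes "onb 2 f" "m < 2" shows "(\<Sum>j<2. (cmod (f m j))\<^sup>2) = 1"
proof -
  have "inn (f m) (f m) = 1" using onb_row[OF assms(1,2,2)] by simp
  then have "complex_of_real (\<Sum>j<2. (cmod (f m j))\<^sup>2) = 1" by (simp only: inn_self)
  then show ?thesis by (simp only: of_real_eq_1_iff)
qed

lemma cmod_inn_swap: "cmod (inn f g) = cmod (inn g f)"
  by (simp add: inn_cnj[of f g])

lemma bform_real:
  assumes "dec lam v \<rho>"
  shows "bform \<rho> g g = complex_of_real (\<Sum>k<2. lam k * (cmod (inn g (v k)))\<^sup>2)"
proof -
  have "bform \<rho> g g = (\<Sum>k<2. complex_of_real (lam k) * (inn g (v k) * cnj (inn g (v k))))"
    by (simp add: dec_bform[OF assms] inn_cnj[of "v _" g] mult.assoc)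
  also have "\<dots> = complex_of_real (\<Sum>k<2. lam k * (cmod (inn g (v k)))\<^sup>2)"
    by (simp add: mult_cnj_self)
  finally show ?thesis .
qed

lemma schur:
  assumes "dec \<mu> v \<rho>" "\<And>k. k < 2 \<Longrightarrow> \<mu> k \<ge> 0" "onb 2 f"
  shows "(\<Sum>k<2. phi (\<mu> k)) \<le> (\<Sum>m<2. phi (Re (bform \<rho> (f m) (f m))))"
proof (rule maj[where s = "\<lambda>m k. (cmod (inn (f m) (v k)))\<^sup>2"])
  have ov: "onb 2 v" using assms(1) by (rule dec_onb)
  show "finite {..<2::nat}" by simp
  show "\<And>k. k < 2 \<Longrightarrow> \<mu> k \<ge> 0" by (rule assms(2))
  show "\<And>z k. z \<in> {..<2} \<Longrightarrow> k < 2 \<Longrightarrow> 0 \<le> (cmod (inn (f z) (v k)))\<^sup>2" by simp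
  show "(\<Sum>k<2. (cmod (inn (f z) (v k)))\<^sup>2) \<le> 1" if "z \<in> {..<2}" for z
  proof -
    have "(\<Sum>k<2. (cmod (inn (f z) (v k)))\<^sup>2) = (\<Sum>k<2. (cmod (inn (v k) (f z)))\<^sup>2)"
      by (simp add: cmod_inn_swap)
    also have "\<dots> = 1" using parseval_real[OF ov] onb_norm1[OF assms(3)] that by simp
    finally show ?thesis by simp
  qed
  show "\<mu> k = 0 \<or> (\<Sum>z<2. (cmod (inn (f z) (v k)))\<^sup>2) = 1" if "k < 2" for k
    using parseval_real[OF assms(3), of "v k"] onb_norm1[OF ov that] by simp
  show "Re (bform \<rho> (f z) (f z)) = (\<Sum>k<2. (cmod (inn (f z) (v k)))\<^sup>2 * \<mu> k)" for z
    by (simp add: bform_real[OF assms(1)] mult.commute)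
qed

lemma cs_complex:
  fixes f g :: "'z \<Rightarrow> complex"
  shows "(cmod (\<Sum>z\<in>Z. f z * cnj (g z)))\<^sup>2 \<le> (\<Sum>z\<in>Z. (cmod (f z))\<^sup>2) * (\<Sum>z\<in>Z. (cmod (g z))\<^sup>2)"
proof -
  have "cmod (\<Sum>z\<in>Z. f z * cnj (g z)) \<le> (\<Sum>z\<in>Z. cmod (f z) * cmod (g z))"
    by (rule order_trans[OF norm_sum]) (simp add: norm_mult)
  then have "(cmod (\<Sum>z\<in>Z. f z * cnj (g z)))\<^sup>2 \<le> (\<Sum>z\<in>Z. cmod (f z) * cmod (g z))\<^sup>2"
    by (rule power_mono) simp
  also have "\<dots> \<le> (\<Sum>z\<in>Z. (cmod (f z))\<^sup>2) * (\<Sum>z\<in>Z. (cmod (g z))\<^sup>2)"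
    by (rule Cauchy_Schwarz_ineq_sum)
  finally show ?thesis .
qed

lemma majB:
  fixes \<alpha> :: "'z \<Rightarrow> nat \<Rightarrow> complex"
  assumes fin: "finite Z" and off: "(\<Sum>z\<in>Z. \<alpha> z 0 * cnj (\<alpha> z 1)) = 0"
  shows "(\<Sum>k<2. phi (\<Sum>z\<in>Z. (cmod (\<alpha> z k))\<^sup>2)) \<le> (\<Sum>z\<in>Z. phi (\<Sum>k<2. (cmod (\<alpha> z k))\<^sup>2))"
proof -
  define \<mu> where "\<mu> k = (\<Sum>z\<in>Z. (cmod (\<alpha> z k))\<^sup>2)" for k
  define s where "s z k = (if \<mu> k = 0 then 0 else (cmod (\<alpha> z k))\<^sup>2 / \<mu> k)" for z k
  have mu0: "\<mu> k \<ge> 0" for k unfolding \<mu>_def by (simp add: sum_nonneg)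
  have le_mu: "(cmod (\<alpha> z k))\<^sup>2 \<le> \<mu> k" if "z \<in> Z" for z k
    unfolding \<mu>_def using fin that by (intro member_le_sum) auto
  have key: "\<mu> 1 * (cmod (\<alpha> z 0))\<^sup>2 + \<mu> 0 * (cmod (\<alpha> z 1))\<^sup>2 \<le> \<mu> 0 * \<mu> 1" if z: "z \<in> Z" for z
  proof -
    define A where "A = (\<Sum>y\<in>Z - {z}. (cmod (\<alpha> y 0))\<^sup>2)"
    define B where "B = (\<Sum>y\<in>Z - {z}. (cmod (\<alpha> y 1))\<^sup>2)"
    define a where "a = (cmod (\<alpha> z 0))\<^sup>2"
    define b where "b = (cmod (\<alpha> z 1))\<^sup>2"
    have m0: "\<mu> 0 = a + A" unfolding \<mu>_def A_def a_def using fin z by (simp add: sum.remove)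
    have m1: "\<mu> 1 = b + B" unfolding \<mu>_def B_def b_def using fin z by (simp add: sum.remove)
    have "\<alpha> z 0 * cnj (\<alpha> z 1) + (\<Sum>y\<in>Z - {z}. \<alpha> y 0 * cnj (\<alpha> y 1)) = 0"
      using off fin z by (simp add: sum.remove)
    then have "(\<Sum>y\<in>Z - {z}. \<alpha> y 0 * cnj (\<alpha> y 1)) = - (\<alpha> z 0 * cnj (\<alpha> z 1))"
      by (simp add: eq_neg_iff_add_eq_0 add.commute)
    then have "a * b = (cmod (\<Sum>y\<in>Z - {z}. \<alpha> y 0 * cnj (\<alpha> y 1)))\<^sup>2"
      by (simp add: a_def b_def norm_mult power_mult_distrib)
    also have "\<dots> \<le> A * B" unfolding A_def B_def by (rule cs_complex)
    finally have "a * b \<le> A * B" .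
    then show ?thesis unfolding m0 m1 a_def[symmetric] b_def[symmetric]
      by (simp add: algebra_simps)
  qed
  have "(\<Sum>k<2. phi (\<mu> k)) \<le> (\<Sum>z\<in>Z. phi (\<Sum>k<2. (cmod (\<alpha> z k))\<^sup>2))"
  proof (rule maj[where s = s])
    show "finite Z" by (rule fin)
    show "\<And>k. k < 2 \<Longrightarrow> 0 \<le> \<mu> k" by (rule mu0)
    show "\<And>z k. z \<in> Z \<Longrightarrow> k < 2 \<Longrightarrow> 0 \<le> s z k" using mu0 by (simp add: s_def)
    show "\<mu> k = 0 \<or> (\<Sum>z\<in>Z. s z k) = 1" if "k < 2" for k
    proof (cases "\<mu> k = 0")
      case False
      then have "(\<Sum>z\<in>Z. s z k) = (\<Sum>z\<in>Z. (cmod (\<alpha> z k))\<^sup>2) / \<mu> k"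
        by (simp add: s_def sum_divide_distrib)
      then show ?thesis using False by (simp add: \<mu>_def)
    qed simp
    show "(\<Sum>k<2. (cmod (\<alpha> z k))\<^sup>2) = (\<Sum>k<2. s z k * \<mu> k)" if "z \<in> Z" for z
    proof (rule sum.cong[OF refl])
      fix k
      show "(cmod (\<alpha> z k))\<^sup>2 = s z k * \<mu> k"
        using le_mu[OF that, of k] mu0[of k] by (auto simp: s_def)
    qed
    show "(\<Sum>k<2. s z k) \<le> 1" if z: "z \<in> Z" for z
    proof -
      have k: "\<mu> 1 * (cmod (\<alpha> z 0))\<^sup>2 + \<mu> 0 * (cmod (\<alpha> z 1))\<^sup>2 \<le> \<mu> 0 * \<mu> 1" by (rule key[OF z])
      have l0: "(cmod (\<alpha> z 0))\<^sup>2 \<le> \<mu> 0" and l1: "(cmod (\<alpha> z 1))\<^sup>2 \<le> \<mu> 1"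
        using le_mu[OF z] by auto
      consider "\<mu> 0 = 0" | "\<mu> 1 = 0" | "\<mu> 0 > 0" "\<mu> 1 > 0" using mu0[of 0] mu0[of 1] by linarith
      then show ?thesis
      proof cases
        case 1
        then show ?thesis using l1 mu0[of 1] by (auto simp: sum2 s_def)
      next
        case 2
        then show ?thesis using l0 mu0[of 0] by (auto simp: sum2 s_def)
      next
        case 3
        have "(cmod (\<alpha> z 0))\<^sup>2 / \<mu> 0 + (cmod (\<alpha> z 1))\<^sup>2 / \<mu> 1
              = (\<mu> 1 * (cmod (\<alpha> z 0))\<^sup>2 + \<mu> 0 * (cmod (\<alpha> z 1))\<^sup>2) / (\<mu> 0 * \<mu> 1)"
          using 3 by (simp add: field_simps)
        also have "\<dots> \<le> 1" using k 3 by simp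
        finally show ?thesis using 3 by (simp add: sum2 s_def)
      qed
    qed
  qed
  then show ?thesis by (simp add: \<mu>_def)
qed

lemma ensemble:
  assumes fin: "finite Z"
    and gram: "\<And>j j'. j < 2 \<Longrightarrow> j' < 2 \<Longrightarrow> \<rho> j j' = (\<Sum>z\<in>Z. u z j * cnj (u z j'))"
    and d: "dec \<mu> v \<rho>"
  shows "(\<Sum>k<2. phi (\<mu> k)) \<le> (\<Sum>z\<in>Z. phi (\<Sum>j<2. (cmod (u z j))\<^sup>2))"
proof -
  have ov: "onb 2 v" using d by (rule dec_onb)
  define \<alpha> where "\<alpha> z k = inn (v k) (u z)" for z k
  have mu: "\<mu> k = (\<Sum>z\<in>Z. (cmod (\<alpha> z k))\<^sup>2)" if "k < 2" for k
  proof -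
    have "complex_of_real (\<mu> k) = bform \<rho> (v k) (v k)" using dec_eig[OF d that that] by simp
    also have "\<dots> = (\<Sum>z\<in>Z. \<alpha> z k * cnj (\<alpha> z k))"
      by (simp add: gram_bform[OF gram] \<alpha>_def inn_cnj[of "u _" "v k"])
    also have "\<dots> = complex_of_real (\<Sum>z\<in>Z. (cmod (\<alpha> z k))\<^sup>2)" by (simp add: mult_cnj_self)
    finally show ?thesis by (simp only: of_real_eq_iff)
  qed
  have off: "(\<Sum>z\<in>Z. \<alpha> z 0 * cnj (\<alpha> z 1)) = 0"
  proof -
    have "(\<Sum>z\<in>Z. \<alpha> z 0 * cnj (\<alpha> z 1)) = bform \<rho> (v 0) (v 1)"
      by (simp add: gram_bform[OF gram] \<alpha>_def) (rule sum.cong, simp_all add: inn_cnj[of "u _"])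
    also have "\<dots> = 0" using dec_eig[OF d, of 0 1] by simp
    finally show ?thesis .
  qed
  have w: "(\<Sum>j<2. (cmod (u z j))\<^sup>2) = (\<Sum>k<2. (cmod (\<alpha> z k))\<^sup>2)" for z
    using parseval_real[OF ov, of "u z"] by (simp add: \<alpha>_def)
  have "(\<Sum>k<2. phi (\<mu> k)) = (\<Sum>k<2. phi (\<Sum>z\<in>Z. (cmod (\<alpha> z k))\<^sup>2))"
    by (rule sum.cong) (auto simp: mu)
  also have "\<dots> \<le> (\<Sum>z\<in>Z. phi (\<Sum>k<2. (cmod (\<alpha> z k))\<^sup>2))" by (rule majB[OF fin off])
  finally show ?thesis by (simp add: w)
qed

lemma dec_mu_gram:
  assumes gram: "\<And>j j'. j < 2 \<Longrightarrow> j' < 2 \<Longrightarrow> \<rho> j j' = (\<Sum>z\<in>Z. u z j * cnj (u z j'))"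
    and d: "dec \<mu> v \<rho>" and k: "k < 2"
  shows "\<mu> k \<ge> 0"
proof -
  have "complex_of_real (\<mu> k) = bform \<rho> (v k) (v k)" using dec_eig[OF d k k] by simp
  also have "\<dots> = (\<Sum>z\<in>Z. inn (v k) (u z) * cnj (inn (v k) (u z)))"
    by (simp add: gram_bform[OF gram] inn_cnj[of "u _" "v k"])
  also have "\<dots> = complex_of_real (\<Sum>z\<in>Z. (cmod (inn (v k) (u z)))\<^sup>2)" by (simp add: mult_cnj_self)
  finally have "\<mu> k = (\<Sum>z\<in>Z. (cmod (inn (v k) (u z)))\<^sup>2)" by (simp only: of_real_eq_iff)
  then show ?thesis by (simp add: sum_nonneg)
qed

lemma gram_herm:
  assumes gram: "\<And>j j'. j < 2 \<Longrightarrow> j' < 2 \<Longrightarrow> \<rho> j j' = (\<Sum>z\<in>Z. u z j * cnj (u z j'))"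
  shows "\<exists>lam v. dec lam v \<rho>"
proof (rule dec_exists)
  show "\<rho> 1 0 = cnj (\<rho> 0 1)" by (simp add: gram mult.commute)
  show "Im (\<rho> 0 0) = 0" by (simp add: gram mult_cnj_self Im_sum)
  show "Im (\<rho> 1 1) = 0" by (simp add: gram mult_cnj_self Im_sum)
qed

lemma conc:
  fixes q :: "nat \<Rightarrow> real" and \<sigma> :: "nat \<Rightarrow> nat \<Rightarrow> nat \<Rightarrow> complex" and \<mu> :: "nat \<Rightarrow> nat \<Rightarrow> real"
  assumes dr: "dec \<nu> f \<rho>"
    and ds: "\<And>i. i < 2 \<Longrightarrow> dec (\<mu> i) (e i) (\<sigma> i)"
    and mu0: "\<And>i k. i < 2 \<Longrightarrow> k < 2 \<Longrightarrow> \<mu> i k \<ge> 0"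
    and q0: "\<And>i. i < 2 \<Longrightarrow> q i \<ge> 0" and qs: "q 0 + q 1 \<le> 1"
    and mix: "\<And>j j'. j < 2 \<Longrightarrow> j' < 2 \<Longrightarrow> \<rho> j j' = (\<Sum>i<2. complex_of_real (q i) * \<sigma> i j j')"
  shows "(\<Sum>i<2. q i * (\<Sum>k<2. phi (\<mu> i k))) \<le> (\<Sum>m<2. phi (\<nu> m))"
proof -
  have of: "onb 2 f" using dr by (rule dec_onb)
  define x where "x i m = Re (bform (\<sigma> i) (f m) (f m))" for i m
  have x0: "x i m \<ge> 0" if "i < 2" for i m
    unfolding x_def using mu0[OF that] by (simp add: bform_real[OF ds[OF that]]) (rule sum_nonneg, simp)
  have nu: "\<nu> m = (\<Sum>i<2. q i * x i m)" if "m < 2" for m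
  proof -
    have "complex_of_real (\<nu> m) = bform \<rho> (f m) (f m)" using dec_eig[OF dr that that] by simp
    also have "\<dots> = (\<Sum>i<2. complex_of_real (q i) * bform (\<sigma> i) (f m) (f m))"
      by (simp add: bform_expand mix sum2 algebra_simps)
    finally have "\<nu> m = Re (\<Sum>i<2. complex_of_real (q i) * bform (\<sigma> i) (f m) (f m))"
      by (metis Re_complex_of_real)
    then show ?thesis by (simp add: x_def sum2)
  qed
  have "(\<Sum>i<2. q i * (\<Sum>k<2. phi (\<mu> i k))) \<le> (\<Sum>i<2. q i * (\<Sum>m<2. phi (x i m)))"
  proof (rule sum_mono)
    fix i assume i: "i \<in> {..<2::nat}"
    have "(\<Sum>k<2. phi (\<mu> i k)) \<le> (\<Sum>m<2. phi (x i m))"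
      unfolding x_def using i by (intro schur[OF ds[of i] _ of]) (auto intro: mu0)
    then show "q i * (\<Sum>k<2. phi (\<mu> i k)) \<le> q i * (\<Sum>m<2. phi (x i m))"
      using q0 i by (intro mult_left_mono) auto
  qed
  also have "\<dots> = (\<Sum>m<2. \<Sum>i<2. q i * phi (x i m))"
    by (simp add: sum_distrib_left sum2 algebra_simps)
  also have "\<dots> \<le> (\<Sum>m<2. phi (\<Sum>i<2. q i * x i m))"
    by (rule sum_mono, rule phi_conc) (use q0 qs x0 in \<open>auto simp: sum2\<close>)
  also have "\<dots> = (\<Sum>m<2. phi (\<nu> m))" by (rule sum.cong) (auto simp: nu)
  finally show ?thesis .
qed




lemma three_cases:
  fixes P Q R n :: nat
  assumes "P < 3" "Q < 3" "R < 3" "P \<noteq> Q" "P \<noteq> R" "Q \<noteq> R" "n < 3"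
  shows "n = P \<or> n = Q \<or> n = R"
  using assms by presburger

lemma cfg3_app:
  assumes "P \<noteq> Q" "P \<noteq> R" "Q \<noteq> R"
  shows "cfg3 P a Q b R c P = a" "cfg3 P a Q b R c Q = b" "cfg3 P a Q b R c R = c"
  using assms by (auto simp: cfg3_def)

lemma cfg3_perm:
  assumes "P \<noteq> Q" "P \<noteq> R" "Q \<noteq> R"
  shows "cfg3 P a Q b R c = cfg3 Q b P a R c"
    "cfg3 P a Q b R c = cfg3 P a R c Q b"
    "cfg3 P a Q b R c = cfg3 R c P a Q b"
    "cfg3 P a Q b R c = cfg3 Q b R c P a"
  using assms unfolding cfg3_def by (intro ext; simp)+

lemma sum_prod3:
  "(\<Sum>z\<in>{..<2::nat} \<times> {..<2::nat} \<times> {..<2::nat}. F z) = (\<Sum>a<2. \<Sum>b<2. \<Sum>c<2. F (a, b, c))"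
  by (simp add: sum.cartesian_product)

lemma configs_sum:
  assumes d: "P \<noteq> Q" "P \<noteq> R" "Q \<noteq> R" and l: "P < 3" "Q < 3" "R < 3"
  shows "(\<Sum>x\<in>configs 3 (\<lambda>_. 2). F x) = (\<Sum>a<2. \<Sum>b<2. \<Sum>c<2. F (cfg3 P a Q b R c))"
proof -
  define g where "g = (\<lambda>(a::nat, b::nat, c::nat). cfg3 P a Q b R c)"
  let ?S = "{..<2::nat} \<times> {..<2::nat} \<times> {..<2::nat}"
  have inj: "inj_on g ?S"
  proof (rule inj_onI)
    fix x y assume "x \<in> ?S" "y \<in> ?S" "g x = g y"
    then obtain a b c a' b' c' where "x = (a,b,c)" "y = (a',b',c')"
      and e: "cfg3 P a Q b R c = cfg3 P a' Q b' R c'" unfolding g_def by (cases x, cases y) auto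
    moreover have "a = a'" using arg_cong[OF e, of "\<lambda>f. f P"] cfg3_app[OF d] by simp
    moreover have "b = b'" using arg_cong[OF e, of "\<lambda>f. f Q"] cfg3_app[OF d] by simp
    moreover have "c = c'" using arg_cong[OF e, of "\<lambda>f. f R"] cfg3_app[OF d] by simp
    ultimately show "x = y" by simp
  qed
  have img: "g ` ?S = configs 3 (\<lambda>_. 2)"
  proof
    show "g ` ?S \<subseteq> configs 3 (\<lambda>_. 2)"
    proof
      fix x assume "x \<in> g ` ?S"
      then obtain a b c where abc: "a < 2" "b < 2" "c < 2" "x = cfg3 P a Q b R c"
        unfolding g_def by auto
      have "x j < 2" if "j < 3" for j
        using three_cases[OF l d that] abc cfg3_app[OF d] by (elim disjE) simp_all
      moreover have "x j = 0" if "j \<ge> 3" for j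
        using that l abc(4) by (simp add: cfg3_def)
      ultimately show "x \<in> configs 3 (\<lambda>_. 2)" by (simp add: configs_def)
    qed
    show "configs 3 (\<lambda>_. 2) \<subseteq> g ` ?S"
    proof
      fix x assume x: "x \<in> configs 3 (\<lambda>_. 2)"
      have "x = cfg3 P (x P) Q (x Q) R (x R)"
      proof
        fix n
        show "x n = cfg3 P (x P) Q (x Q) R (x R) n"
        proof (cases "n < 3")
          case True
          then show ?thesis using three_cases[OF l d True] cfg3_app[OF d] by (elim disjE) simp_all
        next
          case False
          then show ?thesis using x l by (simp add: configs_def cfg3_def)
        qed
      qed
      moreover have "(x P, x Q, x R) \<in> ?S" using x l by (simp add: configs_def)
      ultimately show "x \<in> g ` ?S" unfolding g_def by (intro image_eqI[where x="(x P, x Q, x R)"]) simp_all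
    qed
  qed
  have "(\<Sum>x\<in>configs 3 (\<lambda>_. 2). F x) = (\<Sum>z\<in>?S. F (g z))"
    using sum.reindex[OF inj, of F] img by simp
  also have "\<dots> = (\<Sum>a<2. \<Sum>b<2. \<Sum>c<2. F (cfg3 P a Q b R c))"
    by (simp add: sum_prod3 g_def)
  finally show ?thesis .
qed

definition red :: "((nat \<Rightarrow> nat) \<Rightarrow> complex) \<Rightarrow> nat \<Rightarrow> nat \<Rightarrow> nat \<Rightarrow> complex" where
  "red \<psi> W j j' = (\<Sum>b<2. \<Sum>c<2. \<psi> (cfg3 W j (rest1 W) b (rest2 W) c) * cnj (\<psi> (cfg3 W j' (rest1 W) b (rest2 W) c)))"

lemma red_gen:
  assumes d: "W \<noteq> S" "W \<noteq> T" "S \<noteq> T" and l: "W < 3" "S < 3" "T < 3"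
  shows "(\<Sum>s<2. \<Sum>t<2. \<psi> (cfg3 W j S s T t) * cnj (\<psi> (cfg3 W j' S s T t))) = red \<psi> W j j'"
proof -
  have "(S = rest1 W \<and> T = rest2 W) \<or> (S = rest2 W \<and> T = rest1 W)"
    using d l unfolding rest1_def rest2_def by presburger
  then show ?thesis
  proof
    assume "S = rest1 W \<and> T = rest2 W" then show ?thesis by (simp add: red_def)
  next
    assume st: "S = rest2 W \<and> T = rest1 W"
    have "(\<Sum>s<2. \<Sum>t<2. \<psi> (cfg3 W j S s T t) * cnj (\<psi> (cfg3 W j' S s T t)))
        = (\<Sum>t<2. \<Sum>s<2. \<psi> (cfg3 W j T t S s) * cnj (\<psi> (cfg3 W j' T t S s)))"
      by (subst sum.swap) (simp add: cfg3_perm(2)[OF d])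
    then show ?thesis using st by (simp add: red_def)
  qed
qed

lemma red_gram:
  "red \<psi> W j j' = (\<Sum>z\<in>{..<2::nat} \<times> {..<2::nat}. (\<lambda>z j. \<psi> (cfg3 W j (rest1 W) (fst z) (rest2 W) (snd z))) z j
      * cnj ((\<lambda>z j. \<psi> (cfg3 W j (rest1 W) (fst z) (rest2 W) (snd z))) z j'))"
  unfolding red_def sum.cartesian_product by (simp add: split_def)

lemma red_dec_exists: "\<exists>lam v. dec lam v (red \<psi> W)"
  by (rule gram_herm[OF red_gram])

lemma pc:
  assumes "onb 2 b"
  shows "(\<Sum>i<2. inn (b i) F * cnj (inn (b i) G)) = (\<Sum>a<2. F a * cnj (G a))"
proof -
  have "(\<Sum>i<2. inn (b i) F * cnj (inn (b i) G)) = (\<Sum>i<2. inn G (b i) * inn (b i) F)"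
    by (simp add: inn_cnj[of G] mult.commute)
  also have "\<dots> = inn G F" by (rule parseval[OF assms])
  also have "\<dots> = (\<Sum>a<2. F a * cnj (G a))" by (simp add: inn_def mult.commute)
  finally show ?thesis .
qed




lemma gram_bform_real:
  assumes "\<And>j j'. j < 2 \<Longrightarrow> j' < 2 \<Longrightarrow> \<rho> j j' = (\<Sum>z\<in>Z. u z j * cnj (u z j'))"
  shows "Re (bform \<rho> f f) = (\<Sum>z\<in>Z. (cmod (inn f (u z)))\<^sup>2)"
proof -
  have "bform \<rho> f f = (\<Sum>z\<in>Z. inn f (u z) * cnj (inn f (u z)))"
    by (simp add: gram_bform[OF assms]) (rule sum.cong, simp_all add: inn_cnj[of "u _"])
  also have "\<dots> = complex_of_real (\<Sum>z\<in>Z. (cmod (inn f (u z)))\<^sup>2)" by (simp add: mult_cnj_self)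
  finally show ?thesis by simp
qed

lemma valid_facts:
  assumes "valid_scheme 3 (\<lambda>_. 2) \<pi> B"
  shows "onb 2 (B [])" "\<And>a. a < 2 \<Longrightarrow> onb 2 (B [a])" "\<And>a b. a < 2 \<Longrightarrow> b < 2 \<Longrightarrow> onb 2 (B [a, b])"
    "\<pi> 0 \<noteq> \<pi> 1" "\<pi> 0 \<noteq> \<pi> 2" "\<pi> 1 \<noteq> \<pi> 2" "\<pi> 0 < 3" "\<pi> 1 < 3" "\<pi> 2 < 3"
proof -
  have v: "\<And>hist. length hist < 3 \<Longrightarrow> (\<forall>m<length hist. hist ! m < 2) \<Longrightarrow> onb 2 (B hist)"
    using assms unfolding valid_scheme_def by blast
  have p: "\<pi> permutes {..<3}" using assms unfolding valid_scheme_def by blast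
  show "onb 2 (B [])" by (rule v) simp_all
  show "onb 2 (B [a])" if "a < 2" for a
  proof (rule v)
    show "\<forall>m<length [a]. [a] ! m < 2" using that by simp
  qed simp
  show "onb 2 (B [a, b])" if "a < 2" "b < 2" for a b
  proof (rule v)
    show "\<forall>m<length [a, b]. [a, b] ! m < 2"
    proof (intro allI impI)
      fix m assume "m < length [a, b]"
      then have "m = 0 \<or> m = 1" by auto
      then show "[a, b] ! m < 2" using that by auto
    qed
  qed simp
  have inj: "\<And>x y. \<pi> x = \<pi> y \<Longrightarrow> x = y" using permutes_inj[OF p] by (simp add: inj_eq)
  show "\<pi> 0 \<noteq> \<pi> 1"
  proof
    assume "\<pi> 0 = \<pi> 1"
    then have "(0::nat) = 1" by (rule inj)
    then show False by simp
  qed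
  show "\<pi> 0 \<noteq> \<pi> 2"
  proof
    assume "\<pi> 0 = \<pi> 2"
    then have "(0::nat) = 2" by (rule inj)
    then show False by simp
  qed
  show "\<pi> 1 \<noteq> \<pi> 2"
  proof
    assume "\<pi> 1 = \<pi> 2"
    then have "(1::nat) = 2" by (rule inj)
    then show False by simp
  qed
  show "\<pi> 0 < 3" "\<pi> 1 < 3" "\<pi> 2 < 3" using permutes_in_image[OF p] by simp_all
qed

definition Yv :: "((nat \<Rightarrow> nat) \<Rightarrow> complex) \<Rightarrow> (nat \<Rightarrow> nat) \<Rightarrow> (nat list \<Rightarrow> nat \<Rightarrow> nat \<Rightarrow> complex) \<Rightarrow> nat \<Rightarrow> nat \<Rightarrow> nat \<Rightarrow> complex" where
  "Yv \<psi> \<pi> B i0 b c = inn (B [] i0) (\<lambda>a. \<psi> (cfg3 (\<pi> 0) a (\<pi> 1) b (\<pi> 2) c))"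

definition Uv :: "((nat \<Rightarrow> nat) \<Rightarrow> complex) \<Rightarrow> (nat \<Rightarrow> nat) \<Rightarrow> (nat list \<Rightarrow> nat \<Rightarrow> nat \<Rightarrow> complex) \<Rightarrow> nat \<Rightarrow> nat \<Rightarrow> nat \<Rightarrow> complex" where
  "Uv \<psi> \<pi> B i0 i1 c = inn (B [i0] i1) (\<lambda>b. Yv \<psi> \<pi> B i0 b c)"

lemma map_upt: "map i [0..<0] = []" "map i [0..<1] = [i 0]" "map i [0..<2] = [i 0, i 1]"
  by (simp_all add: numeral_2_eq_2)

lemma amp_eq:
  assumes "valid_scheme 3 (\<lambda>_. 2) \<pi> B"
  shows "outcome_prob 3 (\<lambda>_. 2) \<psi> \<pi> B (cfg3 0 i0 1 i1 2 i2) = (cmod (inn (B [i0, i1] i2) (Uv \<psi> \<pi> B i0 i1)))\<^sup>2"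
proof -
  note vf = valid_facts[OF assms]
  let ?i = "cfg3 0 i0 1 i1 2 i2"
  have iv: "?i 0 = i0" "?i 1 = i1" "?i 2 = i2" by (simp_all add: cfg3_def)
  have "(\<Sum>x\<in>configs 3 (\<lambda>_. 2). (\<Prod>k<3. cnj (B (map ?i [0..<k]) (?i k) (x (\<pi> k)))) * \<psi> x)
      = (\<Sum>a<2. \<Sum>b<2. \<Sum>c<2. (\<Prod>k<3. cnj (B (map ?i [0..<k]) (?i k) (cfg3 (\<pi> 0) a (\<pi> 1) b (\<pi> 2) c (\<pi> k))))
            * \<psi> (cfg3 (\<pi> 0) a (\<pi> 1) b (\<pi> 2) c))"
    by (simp only: configs_sum[OF vf(4,5,6,7,8,9)])
  also have "\<dots> = (\<Sum>a<2. \<Sum>b<2. \<Sum>c<2. cnj (B [] i0 a) * cnj (B [i0] i1 b) * cnj (B [i0, i1] i2 c)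
            * \<psi> (cfg3 (\<pi> 0) a (\<pi> 1) b (\<pi> 2) c))"
    by (simp only: prod3 map_upt iv cfg3_app[OF vf(4,5,6)])
  also have "\<dots> = inn (B [i0, i1] i2) (Uv \<psi> \<pi> B i0 i1)"
    unfolding Uv_def Yv_def inn_def sum2 by (simp only: ring_distribs ac_simps)
  finally show ?thesis by (simp add: outcome_prob_def)
qed

lemma cs0: "(\<Sum>x\<in>configs 3 (\<lambda>_. 2). F x) = (\<Sum>a<2. \<Sum>b<2. \<Sum>c<2. F (cfg3 0 a 1 b 2 c))"
  by (rule configs_sum) simp_all

lemma H_eq:
  assumes "valid_scheme 3 (\<lambda>_. 2) \<pi> B"
  shows "shannon (outcome_prob 3 (\<lambda>_. 2) \<psi> \<pi> B) (configs 3 ((\<lambda>_. 2) \<circ> \<pi>))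
     = (\<Sum>i0<2. \<Sum>i1<2. \<Sum>i2<2. phi ((cmod (inn (B [i0, i1] i2) (Uv \<psi> \<pi> B i0 i1)))\<^sup>2))"
proof -
  have "(\<lambda>_::nat. 2::nat) \<circ> \<pi> = (\<lambda>_. 2)" by (simp add: comp_def)
  then have "shannon (outcome_prob 3 (\<lambda>_. 2) \<psi> \<pi> B) (configs 3 ((\<lambda>_. 2) \<circ> \<pi>))
      = (\<Sum>i0<2. \<Sum>i1<2. \<Sum>i2<2. phi (outcome_prob 3 (\<lambda>_. 2) \<psi> \<pi> B (cfg3 0 i0 1 i1 2 i2)))"
    by (simp only: shannon_phi cs0)
  also have "\<dots> = (\<Sum>i0<2. \<Sum>i1<2. \<Sum>i2<2. phi ((cmod (inn (B [i0, i1] i2) (Uv \<psi> \<pi> B i0 i1)))\<^sup>2))"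
    by (simp only: amp_eq[OF assms])
  finally show ?thesis .
qed

lemma H_ge2:
  assumes "valid_scheme 3 (\<lambda>_. 2) \<pi> B"
  shows "(\<Sum>i0<2. \<Sum>i1<2. phi (\<Sum>c<2. (cmod (Uv \<psi> \<pi> B i0 i1 c))\<^sup>2))
     \<le> shannon (outcome_prob 3 (\<lambda>_. 2) \<psi> \<pi> B) (configs 3 ((\<lambda>_. 2) \<circ> \<pi>))"
proof -
  note vf = valid_facts[OF assms]
  have "(\<Sum>i0<2. \<Sum>i1<2. phi (\<Sum>c<2. (cmod (Uv \<psi> \<pi> B i0 i1 c))\<^sup>2))
      = (\<Sum>i0<2. \<Sum>i1<2. phi (\<Sum>i2<2. (cmod (inn (B [i0, i1] i2) (Uv \<psi> \<pi> B i0 i1)))\<^sup>2))"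
    by (intro sum.cong refl) (simp add: parseval_real vf(3))
  also have "\<dots> \<le> (\<Sum>i0<2. \<Sum>i1<2. \<Sum>i2<2. phi ((cmod (inn (B [i0, i1] i2) (Uv \<psi> \<pi> B i0 i1)))\<^sup>2))"
    by (intro sum_mono phi_subadd) auto
  also have "\<dots> = shannon (outcome_prob 3 (\<lambda>_. 2) \<psi> \<pi> B) (configs 3 ((\<lambda>_. 2) \<circ> \<pi>))"
    by (rule H_eq[OF assms, symmetric])
  finally show ?thesis .
qed

lemma bound_R:
  assumes "valid_scheme 3 (\<lambda>_. 2) \<pi> B"
  shows "vn_entropy 2 (red \<psi> (\<pi> 2)) \<le> shannon (outcome_prob 3 (\<lambda>_. 2) \<psi> \<pi> B) (configs 3 ((\<lambda>_. 2) \<circ> \<pi>))"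
proof -
  note vf = valid_facts[OF assms]
  define u where "u z c = Uv \<psi> \<pi> B (fst z) (snd z) c" for z c
  let ?Z = "{..<2::nat} \<times> {..<2::nat}"
  have gram: "red \<psi> (\<pi> 2) c c' = (\<Sum>z\<in>?Z. u z c * cnj (u z c'))" if "c < 2" "c' < 2" for c c'
  proof -
    have "(\<Sum>z\<in>?Z. u z c * cnj (u z c')) = (\<Sum>i0<2. \<Sum>i1<2. Uv \<psi> \<pi> B i0 i1 c * cnj (Uv \<psi> \<pi> B i0 i1 c'))"
      by (simp add: u_def sum.cartesian_product split_def)
    also have "\<dots> = (\<Sum>i0<2. \<Sum>b<2. Yv \<psi> \<pi> B i0 b c * cnj (Yv \<psi> \<pi> B i0 b c'))"
      by (rule sum.cong[OF refl]) (simp add: Uv_def pc[OF vf(2)])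
    also have "\<dots> = (\<Sum>b<2. \<Sum>i0<2. Yv \<psi> \<pi> B i0 b c * cnj (Yv \<psi> \<pi> B i0 b c'))"
      by (rule sum.swap)
    also have "\<dots> = (\<Sum>b<2. \<Sum>a<2. \<psi> (cfg3 (\<pi> 0) a (\<pi> 1) b (\<pi> 2) c) * cnj (\<psi> (cfg3 (\<pi> 0) a (\<pi> 1) b (\<pi> 2) c')))"
      by (rule sum.cong[OF refl]) (simp add: Yv_def pc[OF vf(1)])
    also have "\<dots> = (\<Sum>a<2. \<Sum>b<2. \<psi> (cfg3 (\<pi> 2) c (\<pi> 0) a (\<pi> 1) b) * cnj (\<psi> (cfg3 (\<pi> 2) c' (\<pi> 0) a (\<pi> 1) b)))"
      by (subst sum.swap) (simp only: cfg3_perm(3)[OF vf(4,5,6)])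
    also have "\<dots> = red \<psi> (\<pi> 2) c c'"
      by (rule red_gen) (use vf in auto)
    finally show ?thesis by simp
  qed
  obtain \<mu> v where d: "dec \<mu> v (red \<psi> (\<pi> 2))" using red_dec_exists by blast
  have "vn_entropy 2 (red \<psi> (\<pi> 2)) = (\<Sum>k<2. phi (\<mu> k))" by (rule vn_dec[OF d])
  also have "\<dots> \<le> (\<Sum>z\<in>?Z. phi (\<Sum>j<2. (cmod (u z j))\<^sup>2))"
    by (rule ensemble[OF _ gram d]) auto
  also have "\<dots> = (\<Sum>i0<2. \<Sum>i1<2. phi (\<Sum>c<2. (cmod (Uv \<psi> \<pi> B i0 i1 c))\<^sup>2))"
    by (simp add: u_def sum.cartesian_product split_def)
  also have "\<dots> \<le> shannon (outcome_prob 3 (\<lambda>_. 2) \<psi> \<pi> B) (configs 3 ((\<lambda>_. 2) \<circ> \<pi>))"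
    by (rule H_ge2[OF assms])
  finally show ?thesis .
qed

lemma bound_P:
  assumes "valid_scheme 3 (\<lambda>_. 2) \<pi> B"
  shows "vn_entropy 2 (red \<psi> (\<pi> 0)) \<le> shannon (outcome_prob 3 (\<lambda>_. 2) \<psi> \<pi> B) (configs 3 ((\<lambda>_. 2) \<circ> \<pi>))"
proof -
  note vf = valid_facts[OF assms]
  let ?Z = "{..<2::nat} \<times> {..<2::nat}"
  define w where "w = (\<lambda>z a. \<psi> (cfg3 (\<pi> 0) a (\<pi> 1) (fst z) (\<pi> 2) (snd z)))"
  have gram: "red \<psi> (\<pi> 0) a a' = (\<Sum>z\<in>?Z. w z a * cnj (w z a'))" if "a < 2" "a' < 2" for a a'
  proof -
    have "(\<Sum>z\<in>?Z. w z a * cnj (w z a')) = (\<Sum>b<2. \<Sum>c<2. \<psi> (cfg3 (\<pi> 0) a (\<pi> 1) b (\<pi> 2) c) * cnj (\<psi> (cfg3 (\<pi> 0) a' (\<pi> 1) b (\<pi> 2) c)))"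
      by (simp add: w_def sum.cartesian_product split_def)
    also have "\<dots> = red \<psi> (\<pi> 0) a a'" by (rule red_gen) (use vf in auto)
    finally show ?thesis by simp
  qed
  obtain \<mu> v where d: "dec \<mu> v (red \<psi> (\<pi> 0))" using red_dec_exists by blast
  have mu0: "\<mu> k \<ge> 0" if "k < 2" for k by (rule dec_mu_gram[OF gram d that])
  have M1: "Re (bform (red \<psi> (\<pi> 0)) (B [] i0) (B [] i0)) = (\<Sum>i1<2. \<Sum>c<2. (cmod (Uv \<psi> \<pi> B i0 i1 c))\<^sup>2)" if i0: "i0 < 2" for i0
  proof -
    have "Re (bform (red \<psi> (\<pi> 0)) (B [] i0) (B [] i0)) = (\<Sum>z\<in>?Z. (cmod (inn (B [] i0) (w z)))\<^sup>2)"
      by (rule gram_bform_real[OF gram])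
    also have "\<dots> = (\<Sum>b<2. \<Sum>c<2. (cmod (Yv \<psi> \<pi> B i0 b c))\<^sup>2)"
      by (simp add: w_def Yv_def sum.cartesian_product split_def)
    also have "\<dots> = (\<Sum>c<2. \<Sum>b<2. (cmod (Yv \<psi> \<pi> B i0 b c))\<^sup>2)" by (rule sum.swap)
    also have "\<dots> = (\<Sum>c<2. \<Sum>i1<2. (cmod (Uv \<psi> \<pi> B i0 i1 c))\<^sup>2)"
      by (rule sum.cong[OF refl]) (simp add: Uv_def parseval_real[OF vf(2)[OF i0]])
    also have "\<dots> = (\<Sum>i1<2. \<Sum>c<2. (cmod (Uv \<psi> \<pi> B i0 i1 c))\<^sup>2)" by (rule sum.swap)
    finally show ?thesis .
  qed
  have "vn_entropy 2 (red \<psi> (\<pi> 0)) = (\<Sum>k<2. phi (\<mu> k))" by (rule vn_dec[OF d])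
  also have "\<dots> \<le> (\<Sum>i0<2. phi (Re (bform (red \<psi> (\<pi> 0)) (B [] i0) (B [] i0))))"
    by (rule schur[OF d mu0 vf(1)])
  also have "\<dots> = (\<Sum>i0<2. phi (\<Sum>i1<2. \<Sum>c<2. (cmod (Uv \<psi> \<pi> B i0 i1 c))\<^sup>2))"
    by (rule sum.cong[OF refl]) (simp add: M1)
  also have "\<dots> \<le> (\<Sum>i0<2. \<Sum>i1<2. phi (\<Sum>c<2. (cmod (Uv \<psi> \<pi> B i0 i1 c))\<^sup>2))"
    by (rule sum_mono, rule phi_subadd) (auto intro: sum_nonneg)
  also have "\<dots> \<le> shannon (outcome_prob 3 (\<lambda>_. 2) \<psi> \<pi> B) (configs 3 ((\<lambda>_. 2) \<circ> \<pi>))"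
    by (rule H_ge2[OF assms])
  finally show ?thesis .
qed




lemma dec_same2:
  assumes "dec lam v \<rho>" "dec lam' v' \<sigma>" "\<rho> 0 0 + \<rho> 1 1 = \<sigma> 0 0 + \<sigma> 1 1"
    "\<rho> 0 0 * \<rho> 1 1 - \<rho> 0 1 * \<rho> 1 0 = \<sigma> 0 0 * \<sigma> 1 1 - \<sigma> 0 1 * \<sigma> 1 0"
  shows "(\<Sum>k<2. phi (lam k)) = (\<Sum>k<2. phi (lam' k))"
proof -
  have "lam 0 + lam 1 = lam' 0 + lam' 1"
    using dec_tr[OF assms(1)] dec_tr[OF assms(2)] assms(3) by (metis of_real_eq_iff)
  moreover have "lam 0 * lam 1 = lam' 0 * lam' 1"
    using dec_det[OF assms(1)] dec_det[OF assms(2)] assms(4) by (metis of_real_eq_iff)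
  ultimately have "(lam' 0 = lam 0 \<and> lam' 1 = lam 1) \<or> (lam' 0 = lam 1 \<and> lam' 1 = lam 0)"
    by (rule pair_eq)
  then show ?thesis by (auto simp: sum2)
qed

lemma vn_swap:
  "vn_entropy 2 (\<lambda>j j'. \<Sum>k<2. \<phi> j k * cnj (\<phi> j' k)) = vn_entropy 2 (\<lambda>k k'. \<Sum>j<2. \<phi> j k * cnj (\<phi> j k'))"
proof -
  obtain l1 v1 where d1: "dec l1 v1 (\<lambda>j j'. \<Sum>k<2. \<phi> j k * cnj (\<phi> j' k))"
    using gram_herm[where \<rho>="\<lambda>j j'. \<Sum>k<2. \<phi> j k * cnj (\<phi> j' k)" and Z="{..<2}" and u="\<lambda>k j. \<phi> j k"] by auto
  obtain l2 v2 where d2: "dec l2 v2 (\<lambda>k k'. \<Sum>j<2. \<phi> j k * cnj (\<phi> j k'))"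
    using gram_herm[where \<rho>="\<lambda>k k'. \<Sum>j<2. \<phi> j k * cnj (\<phi> j k')" and Z="{..<2}" and u="\<lambda>j k. \<phi> j k"] by auto
  have "(\<Sum>k<2. phi (l1 k)) = (\<Sum>k<2. phi (l2 k))"
    by (rule dec_same2[OF d1 d2]) (simp_all add: sum2 algebra_simps)
  then show ?thesis by (simp add: vn_dec[OF d1] vn_dec[OF d2])
qed

lemma rest_facts:
  assumes "X < 3"
  shows "X \<noteq> rest1 X" "X \<noteq> rest2 X" "rest1 X \<noteq> rest2 X" "rest1 X < 3" "rest2 X < 3"
  using assms unfolding rest1_def rest2_def by auto

lemma W_cases:
  assumes "X < 3" "W < 3" "W \<noteq> X"
  shows "W = rest1 X \<or> W = rest2 X"
  using assms unfolding rest1_def rest2_def by presburger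

lemma locc:
  assumes us: "unit_state 3 (\<lambda>_. 2) \<psi>" and X: "X < 3" and ob: "onb 2 b" and W: "W < 3" "W \<noteq> X"
  shows "(\<Sum>i<2. post_prob \<psi> X b i * ent_entropy (post_state \<psi> X b i)) \<le> vn_entropy 2 (red \<psi> W)"
proof -
  define Y where "Y = rest1 X"
  define Z where "Z = rest2 X"
  note rf = rest_facts[OF X, folded Y_def Z_def]
  define A where "A = (\<lambda>a j k. \<psi> (cfg3 X a Y j Z k))"
  define U where "U = (\<lambda>i j k. inn (b i) (\<lambda>a. A a j k))"
  define q where "q = (\<lambda>i. post_prob \<psi> X b i)"
  define \<phi> where "\<phi> = (\<lambda>i. post_state \<psi> X b i)"
  have Ueq: "post_unnorm \<psi> X b i j k = U i j k" for i j k
    by (simp add: post_unnorm_def U_def inn_def A_def Y_def Z_def)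
  have q_def': "q i = (\<Sum>j<2. \<Sum>k<2. (cmod (U i j k))\<^sup>2)" for i
    by (simp add: q_def post_prob_def Ueq)
  have q0: "q i \<ge> 0" for i by (simp add: q_def' sum_nonneg)
  have qsum: "q 0 + q 1 = 1"
  proof -
    have "q 0 + q 1 = (\<Sum>i<2. \<Sum>j<2. \<Sum>k<2. (cmod (U i j k))\<^sup>2)" by (simp add: q_def' sum2)
    also have "\<dots> = (\<Sum>j<2. \<Sum>k<2. \<Sum>i<2. (cmod (U i j k))\<^sup>2)"
      by (subst sum.swap, rule sum.cong[OF refl], rule sum.swap)
    also have "\<dots> = (\<Sum>j<2. \<Sum>k<2. \<Sum>a<2. (cmod (A a j k))\<^sup>2)"
      by (simp add: U_def parseval_real[OF ob])
    also have "\<dots> = (\<Sum>a<2. \<Sum>j<2. \<Sum>k<2. (cmod (A a j k))\<^sup>2)"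
      by (rule sym, subst sum.swap, rule sum.cong[OF refl], rule sum.swap)
    also have "\<dots> = (\<Sum>x\<in>configs 3 (\<lambda>_. 2). (cmod (\<psi> x))\<^sup>2)"
      by (simp only: A_def configs_sum[OF rf(1,2,3) X rf(4,5)])
    also have "\<dots> = 1" using us by (simp add: unit_state_def)
    finally show ?thesis .
  qed
  have F3: "complex_of_real (q i) * (\<phi> i j k * cnj (\<phi> i j' k')) = U i j k * cnj (U i j' k')"
    if "j < 2" "j' < 2" "k < 2" "k' < 2" for i j j' k k'
  proof (cases "q i = 0")
    case True
    have "\<forall>j<2. \<forall>k<2. (cmod (U i j k))\<^sup>2 = 0"
    proof (intro allI impI)
      fix j k :: nat assume "j < 2" "k < 2"
      have "(cmod (U i j k))\<^sup>2 \<le> (\<Sum>k<2. (cmod (U i j k))\<^sup>2)"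
        using \<open>k<2\<close> by (intro member_le_sum) auto
      also have "\<dots> \<le> (\<Sum>j<2. \<Sum>k<2. (cmod (U i j k))\<^sup>2)"
        using \<open>j<2\<close> by (intro member_le_sum) (auto intro: sum_nonneg)
      finally show "(cmod (U i j k))\<^sup>2 = 0" using True q_def'[of i] by simp
    qed
    then have "U i j k = 0" "U i j' k' = 0" using that by auto
    then show ?thesis using True by simp
  next
    case False
    then have qp: "q i > 0" using q0[of i] by simp
    have ph: "\<phi> i j k = U i j k / complex_of_real (sqrt (q i))" for j k
      by (simp add: \<phi>_def post_state_def Ueq q_def)
    have s: "complex_of_real (sqrt (q i)) * cnj (complex_of_real (sqrt (q i))) = complex_of_real (q i)"
      using qp by (simp flip: of_real_mult)
    have nz: "complex_of_real (sqrt (q i)) \<noteq> 0" using qp by simp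
    show ?thesis using nz s qp by (simp add: ph field_simps)
  qed
  obtain \<nu> f where dr: "dec \<nu> f (red \<psi> W)" using red_dec_exists by blast
  from W_cases[OF X W] have "W = Y \<or> W = Z" by (simp add: Y_def Z_def)
  then show ?thesis
  proof
    assume WY: "W = Y"
    define \<sigma> where "\<sigma> = (\<lambda>i j j'. \<Sum>k<2. \<phi> i j k * cnj (\<phi> i j' k))"
    have ent: "ent_entropy (\<phi> i) = vn_entropy 2 (\<sigma> i)" for i
      by (simp add: ent_entropy_def \<sigma>_def)
    have gram: "\<sigma> i j j' = (\<Sum>z\<in>{..<2}. (\<lambda>k j. \<phi> i j k) z j * cnj ((\<lambda>k j. \<phi> i j k) z j'))" for i j j'
      by (simp add: \<sigma>_def)
    have "\<forall>i. \<exists>p. dec (fst p) (snd p) (\<sigma> i)" using gram_herm[OF gram] by auto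
    then obtain p where dp: "\<And>i. dec (fst (p i)) (snd (p i)) (\<sigma> i)" by (metis choice)
    define \<mu> where "\<mu> = (\<lambda>i. fst (p i))"
    define e where "e = (\<lambda>i. snd (p i))"
    have ds: "dec (\<mu> i) (e i) (\<sigma> i)" for i using dp by (simp add: \<mu>_def e_def)
    have mu0: "\<mu> i k \<ge> 0" if "k < 2" for i k by (rule dec_mu_gram[OF gram ds that])
    have mix: "red \<psi> W j j' = (\<Sum>i<2. complex_of_real (q i) * \<sigma> i j j')" if "j < 2" "j' < 2" for j j'
    proof -
      have "(\<Sum>i<2. complex_of_real (q i) * \<sigma> i j j') = (\<Sum>i<2. \<Sum>k<2. U i j k * cnj (U i j' k))"
        unfolding \<sigma>_def sum_distrib_left using F3 that by (intro sum.cong refl) auto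
      also have "\<dots> = (\<Sum>k<2. \<Sum>i<2. U i j k * cnj (U i j' k))" by (rule sum.swap)
      also have "\<dots> = (\<Sum>k<2. \<Sum>a<2. A a j k * cnj (A a j' k))"
        by (rule sum.cong[OF refl]) (simp add: U_def pc[OF ob])
      also have "\<dots> = (\<Sum>a<2. \<Sum>k<2. \<psi> (cfg3 Y j X a Z k) * cnj (\<psi> (cfg3 Y j' X a Z k)))"
        by (subst sum.swap) (simp only: A_def cfg3_perm(1)[OF rf(1,2,3)])
      also have "\<dots> = red \<psi> Y j j'" by (rule red_gen) (use rf X in auto)
      finally show ?thesis using WY by simp
    qed
    have "(\<Sum>i<2. q i * ent_entropy (\<phi> i)) = (\<Sum>i<2. q i * (\<Sum>k<2. phi (\<mu> i k)))"
      by (simp add: ent vn_dec[OF ds])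
    also have "\<dots> \<le> (\<Sum>m<2. phi (\<nu> m))"
      by (rule conc[OF dr ds mu0 q0]) (use qsum mix in auto)
    also have "\<dots> = vn_entropy 2 (red \<psi> W)" by (simp add: vn_dec[OF dr])
    finally show ?thesis by (simp add: q_def \<phi>_def)
  next
    assume WZ: "W = Z"
    define \<sigma> where "\<sigma> = (\<lambda>i k k'. \<Sum>j<2. \<phi> i j k * cnj (\<phi> i j k'))"
    have ent: "ent_entropy (\<phi> i) = vn_entropy 2 (\<sigma> i)" for i
      unfolding ent_entropy_def \<sigma>_def by (rule vn_swap)
    have gram: "\<sigma> i k k' = (\<Sum>z\<in>{..<2}. (\<lambda>j k. \<phi> i j k) z k * cnj ((\<lambda>j k. \<phi> i j k) z k'))" for i k k'
      by (simp add: \<sigma>_def)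
    have "\<forall>i. \<exists>p. dec (fst p) (snd p) (\<sigma> i)" using gram_herm[OF gram] by auto
    then obtain p where dp: "\<And>i. dec (fst (p i)) (snd (p i)) (\<sigma> i)" by (metis choice)
    define \<mu> where "\<mu> = (\<lambda>i. fst (p i))"
    define e where "e = (\<lambda>i. snd (p i))"
    have ds: "dec (\<mu> i) (e i) (\<sigma> i)" for i using dp by (simp add: \<mu>_def e_def)
    have mu0: "\<mu> i k \<ge> 0" if "k < 2" for i k by (rule dec_mu_gram[OF gram ds that])
    have mix: "red \<psi> W k k' = (\<Sum>i<2. complex_of_real (q i) * \<sigma> i k k')" if "k < 2" "k' < 2" for k k'
    proof -
      have "(\<Sum>i<2. complex_of_real (q i) * \<sigma> i k k') = (\<Sum>i<2. \<Sum>j<2. U i j k * cnj (U i j k'))"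
        unfolding \<sigma>_def sum_distrib_left using F3 that by (intro sum.cong refl) auto
      also have "\<dots> = (\<Sum>j<2. \<Sum>i<2. U i j k * cnj (U i j k'))" by (rule sum.swap)
      also have "\<dots> = (\<Sum>j<2. \<Sum>a<2. A a j k * cnj (A a j k'))"
        by (rule sum.cong[OF refl]) (simp add: U_def pc[OF ob])
      also have "\<dots> = (\<Sum>a<2. \<Sum>j<2. \<psi> (cfg3 Z k X a Y j) * cnj (\<psi> (cfg3 Z k' X a Y j)))"
        by (subst sum.swap) (simp only: A_def cfg3_perm(3)[OF rf(1,2,3)])
      also have "\<dots> = red \<psi> Z k k'" by (rule red_gen) (use rf X in auto)
      finally show ?thesis using WZ by simp
    qed
    have "(\<Sum>i<2. q i * ent_entropy (\<phi> i)) = (\<Sum>i<2. q i * (\<Sum>k<2. phi (\<mu> i k)))"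
      by (simp add: ent vn_dec[OF ds])
    also have "\<dots> \<le> (\<Sum>m<2. phi (\<nu> m))"
      by (rule conc[OF dr ds mu0 q0]) (use qsum mix in auto)
    also have "\<dots> = vn_entropy 2 (red \<psi> W)" by (simp add: vn_dec[OF dr])
    finally show ?thesis by (simp add: q_def \<phi>_def)
  qed
qed




definition B0 :: "nat \<Rightarrow> nat \<Rightarrow> complex" where "B0 = (\<lambda>i j. if i = j then 1 else 0)"

lemma onb_B0: "onb 2 B0"
  unfolding onb_def B0_def by (auto simp: sum2 less2)

lemma E_le:
  assumes us: "unit_state 3 (\<lambda>_. 2) \<psi>" and X: "X < 3"
  shows "E_LOCC_party \<psi> X \<le> EMB 3 (\<lambda>_. 2) \<psi>"
proof -
  let ?T = "{shannon (outcome_prob 3 (\<lambda>_. 2) \<psi> \<pi> B) (configs 3 ((\<lambda>_. 2) \<circ> \<pi>)) | \<pi> B. valid_scheme 3 (\<lambda>_. 2) \<pi> B}"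
  let ?S = "{\<Sum>i<2. post_prob \<psi> X b i * ent_entropy (post_state \<psi> X b i) | b. onb 2 b}"
  have vid: "valid_scheme 3 (\<lambda>_. 2) id (\<lambda>_. B0)"
    unfolding valid_scheme_def using onb_B0 by (simp add: permutes_id)
  then have Tne: "?T \<noteq> {}" by blast
  have Sne: "?S \<noteq> {}" using onb_B0 by blast
  have "Sup ?S \<le> Inf ?T"
  proof (rule cSup_least[OF Sne])
    fix s assume "s \<in> ?S"
    then obtain b where ob: "onb 2 b" and s: "s = (\<Sum>i<2. post_prob \<psi> X b i * ent_entropy (post_state \<psi> X b i))"
      by blast
    show "s \<le> Inf ?T"
    proof (rule cInf_greatest[OF Tne])
      fix t assume "t \<in> ?T"
      then obtain \<pi> B where v: "valid_scheme 3 (\<lambda>_. 2) \<pi> B"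
        and t: "t = shannon (outcome_prob 3 (\<lambda>_. 2) \<psi> \<pi> B) (configs 3 ((\<lambda>_. 2) \<circ> \<pi>))" by blast
      note vf = valid_facts[OF v]
      show "s \<le> t"
      proof (cases "X = \<pi> 0")
        case False
        have "s \<le> vn_entropy 2 (red \<psi> (\<pi> 0))" unfolding s
          by (rule locc[OF us X ob vf(7)]) (use False in auto)
        also have "\<dots> \<le> t" unfolding t by (rule bound_P[OF v])
        finally show ?thesis .
      next
        case True
        have "s \<le> vn_entropy 2 (red \<psi> (\<pi> 2))" unfolding s
          by (rule locc[OF us X ob vf(9)]) (use True vf(5) in auto)
        also have "\<dots> \<le> t" unfolding t by (rule bound_R[OF v])
        finally show ?thesis .
      qed
    qed
  qed
  then show ?thesis unfolding E_LOCC_party_def EMB_def .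
qed

theorem theorem1:
  fixes \<psi> :: "(nat \<Rightarrow> nat) \<Rightarrow> complex"
  assumes "unit_state 3 (\<lambda>_. 2) \<psi>"
  shows "EMB 3 (\<lambda>_. 2) \<psi> \<ge> E_LOCC \<psi>"
  using E_le[OF assms, of 0] E_le[OF assms, of 1] E_le[OF assms, of 2]
  by (simp add: E_LOCC_def)


end
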